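(* For every $r\ge1$, let $L^\bullet=\mathrm{Log}(\mathrm{Sem}^\bullet)$ and $L^{\circ r}=L^\bullet\circ\cdots\circ L^\bullet$ ($r$ times). Then $$F^r_{\rm Sem}=F_{\rm lin}\exp\Big(\sum_{\mathbf{m}\in\mathcal{A}(F)^*}(L^{\circ r})^{\mathbf{m}}D_{\mathbf{m}}\Big),$$ i.e. the mould ${}_r\mathrm{Sem}^\bullet$ with $F^r_{\rm Sem}=F_{\rm lin}(\sum{}_r\mathrm{Sem}^{\mathbf{m}}D_{\mathbf{m}})$ can be taken with $\mathrm{Log}[{}_r\mathrm{Sem}^\bullet]=\mathrm{Log}(\mathrm{Sem}^\bullet)\circ\cdots\circ\mathrm{Log}(\mathrm{Sem}^\bullet)$ ($r$ times).
   Context: Fix $\nu\ge1$, $\lambda\in\mathbb{C}^\nu$, $\lambda\cdot m=\sum_i\lambda_im_i$. Let $f(x)=(e^{\lambda_1}x_1,\dots,e^{\lambda_\nu}x_\nu)+h(x)$ be a local analytic diffeomorphism of $(\mathbb{C}^\nu,0)$, $F(\varphi)=\varphi\circ f$ on $\mathbb{C}[[x]]$, $F_{\rm lin}(x^m)=e^{\lambda\cdot m}x^m$. An operator is homogeneous of degree $m\in\mathbb{Z}^\nu$ if it maps each $x^k$ to a multiple of $x^{k+m}$. Write $F=F_{\rm lin}\exp(\sum_{m\in\mathcal{A}(F)}D_m)$ with $D_m$ homogeneous derivations of degree $m$, $\mathcal{A}(F)\subset\mathbb{Z}^\nu$ taken closed under addition (degrees with zero operator allowed). Words $\mathbf{m}=m_1\cdots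 m_r$ (possibly empty), $D_{\mathbf{m}}=D_{m_1}\circ\cdots\circ D_{m_r}$, $D_\emptyset=\mathrm{Id}$, $\|\mathbf{m}\|=m_1+\dots+m_r$. Moulds are maps from words to $\mathbb{C}$, identified with series $\sum M^{\mathbf{a}}\mathbf{a}$ in non-commuting letters; product $(M\cdot N)^{\mathbf{a}}=\sum_{\mathbf{a}^1\mathbf{a}^2=\mathbf{a}}M^{\mathbf{a}^1}N^{\mathbf{a}^2}$; $I^\bullet$ is $1$ on length-one words, $0$ elsewhere; $\mathrm{Exp}\,M=\sum_{k\ge0}M^{\cdot k}/k!$ for $M^\emptyset=0$; for $M$ with $M^\emptyset=1$, $\mathrm{Log}\,M$ is the mould with $\sum(\mathrm{Log}M)^{\mathbf{a}}\mathbf{a}=\log(\sum M^{\mathbf{a}}\mathbf{a})$, $\log(1+y)=\sum_{k\ge1}(-1)^{k+1}y^k/k$; $e^\Delta(M)^{\mathbf{m}}=e^{-\lambda\cdot\|\mathbf{m}\|}M^{\mathbf{m}}$. Composition: $M\circ N$ has generating series $\sum_{\mathbf{b}}M^{\mathbf{b}}\Phi_N^{b_1}\cdots\Phi_N^{b_r}$ with $\Phi_N^{c}=\sum_{\mathbf{a}\neq\emptyset,\|\mathbf{a}\|=c}N^{\mathbf{a}}\mathbf{a}$. Universal moulds: $\mathrm{Dem}^\bullet$ equals $1/(1-e^{\lambda\cdot m})$ on one-letter words $m$ with $e^{\lambda\cdot m}\neq1$ and $0$ on all other words; $\mathrm{Sem}^\bullet=e^\Delta(\mathrm{Exp}\,\mathrm{Dem}^\bullet)\cdot\mathrm{Exp}(I^\bullet)\cdot\mathrm{Exp}(-\mathrm{Dem}^\bullet)$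 (it satisfies $\mathrm{Sem}^\emptyset=1$). Trimmed form up to order $r$: $F^0_{\rm Sem}=F$; given $F^{i-1}_{\rm Sem}=F_{\rm lin}\exp(\sum_m{}_iD_m)$ with ${}_iD_m$ homogeneous derivations of degree $m$, let $\mathbf{V}_i=\sum_{m:\,e^{\lambda\cdot m}\neq1}{}_iD_m/(1-e^{\lambda\cdot m})$ and $F^i_{\rm Sem}=\exp(\mathbf{V}_i)F^{i-1}_{\rm Sem}\exp(-\mathbf{V}_i)$. *)

theory Defs
  imports "HOL-Analysis.Analysis"
begin

section \<open>Formal power series in the variables x_i, i :: 'n (finite), nu = CARD('n)\<close>

type_synonym 'n mono = "'n \<Rightarrow> nat"
type_synonym 'n deg = "'n \<Rightarrow> int"
type_synonym 'n series = "'n mono \<Rightarrow> complex"  (* element of C[[x]], by coefficients *)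
type_synonym 'n op = "'n series \<Rightarrow> 'n series"

definition tdeg :: "('n::finite \<Rightarrow> 'a::comm_monoid_add) \<Rightarrow> 'a" where
  "tdeg k = (\<Sum>i\<in>UNIV. k i)"

definition unitv :: "'n \<Rightarrow> 'n mono" where
  "unitv l = (\<lambda>t. if t = l then 1 else 0)"

definition sone :: "'n series" where
  "sone = (\<lambda>j. if j = (\<lambda>_. 0) then 1 else 0)"

definition smult :: "'n::finite series \<Rightarrow> 'n series \<Rightarrow> 'n series" where
  "smult \<phi> \<psi> = (\<lambda>j. \<Sum>a\<in>{a. \<forall>i. a i \<le> j i}. \<phi> a * \<psi> (\<lambda>i. j i - a i))"

fun spow :: "'n::finite series \<Rightarrow> nat \<Rightarrow> 'n series" where
  "spow g 0 = sone"
| "spow g (Suc n) = smult g (spow g n)"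

definition sprod :: "('n::finite \<Rightarrow> 'n series) \<Rightarrow> 'n series" where
  "sprod g = (\<lambda>j. \<Sum>a\<in>{a :: 'n \<Rightarrow> 'n mono. (\<lambda>t. \<Sum>i\<in>UNIV. a i t) = j}. \<Prod>i\<in>UNIV. g i (a i))"

text \<open>The substitution operator F(phi) = phi o f, for f = (f_1,...,f_nu) without constant
  terms: F(phi) = sum_k phi_k prod_i f_i^(k_i); only |k| <= |j| contribute to x^j.\<close>
definition compF :: "('n::finite \<Rightarrow> 'n series) \<Rightarrow> 'n op" where
  "compF f \<phi> = (\<lambda>j. \<Sum>k\<in>{k. tdeg k \<le> tdeg j}. \<phi> k * sprod (\<lambda>i. spow (f i) (k i)) j)"

definition ldot :: "('n::finite \<Rightarrow> complex) \<Rightarrow> 'n deg \<Rightarrow> complex" where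
  "ldot lam m = (\<Sum>i\<in>UNIV. lam i * of_int (m i))"

definition Flin :: "('n::finite \<Rightarrow> complex) \<Rightarrow> 'n op" where
  "Flin lam \<phi> = (\<lambda>k. exp (ldot lam (\<lambda>i. int (k i))) * \<phi> k)"

text \<open>Homogeneous (continuous linear) operator of degree m: x^k is sent to c_k x^(k+m).\<close>
definition hom_op :: "'n deg \<Rightarrow> 'n op \<Rightarrow> bool" where
  "hom_op m T \<longleftrightarrow> (\<exists>c :: 'n mono \<Rightarrow> complex. \<forall>\<phi> j. T \<phi> j =
     (if (\<forall>i. m i \<le> int (j i))
      then c (\<lambda>i. nat (int (j i) - m i)) * \<phi> (\<lambda>i. nat (int (j i) - m i)) else 0))"

definition is_derivation :: "'n::finite op \<Rightarrow> bool" where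
  "is_derivation T \<longleftrightarrow>
     (\<forall>\<phi> \<psi>. T (smult \<phi> \<psi>) = (\<lambda>j. smult (T \<phi>) \<psi> j + smult \<phi> (T \<psi>) j))"

definition hom_der :: "'n::finite deg \<Rightarrow> 'n op \<Rightarrow> bool" where
  "hom_der m T \<longleftrightarrow> hom_op m T \<and> is_derivation T"

definition opsum :: "('i \<Rightarrow> 'n op) \<Rightarrow> 'i set \<Rightarrow> 'n op" where
  "opsum D S \<phi> = (\<lambda>j. infsum (\<lambda>m. D m \<phi> j) S)"

definition opscale :: "complex \<Rightarrow> 'n op \<Rightarrow> 'n op" where
  "opscale c T \<phi> = (\<lambda>j. c * T \<phi> j)"

definition opzero :: "'n op" where
  "opzero \<phi> = (\<lambda>j. 0)"

definition opexp :: "'n op \<Rightarrow> 'n op" where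
  "opexp T \<phi> = (\<lambda>j. infsum (\<lambda>n. (T ^^ n) \<phi> j / fact n) UNIV)"

fun Dword :: "('n deg \<Rightarrow> 'n op) \<Rightarrow> 'n deg list \<Rightarrow> 'n op" where
  "Dword D [] = id"
| "Dword D (m # w) = D m \<circ> Dword D w"

type_synonym 'n mould = "'n deg list \<Rightarrow> complex"

definition wnorm :: "'n deg list \<Rightarrow> 'n deg" where
  "wnorm w = (\<lambda>i. sum_list (map (\<lambda>m. m i) w))"

definition mone :: "'n mould" where
  "mone w = (if w = [] then 1 else 0)"

definition mmul :: "'n mould \<Rightarrow> 'n mould \<Rightarrow> 'n mould" where
  "mmul M N w = (\<Sum>k\<le>length w. M (take k w) * N (drop k w))"

fun mpow :: "'n mould \<Rightarrow> nat \<Rightarrow> 'n mould" where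
  "mpow M 0 = mone"
| "mpow M (Suc k) = mmul M (mpow M k)"

definition mI :: "'n mould" where
  "mI w = (if length w = 1 then 1 else 0)"

definition mExp :: "'n mould \<Rightarrow> 'n mould" where
  "mExp M w = infsum (\<lambda>k. mpow M k w / fact k) UNIV"

text \<open>Log M, for M with M(empty) = 1: log(1+y) = sum_(k>=1) (-1)^(k+1) y^k / k with y = M - 1.\<close>
definition mLog :: "'n mould \<Rightarrow> 'n mould" where
  "mLog M w = infsum (\<lambda>k. (-1) ^ (k + 1) / of_nat k * mpow (\<lambda>v. M v - mone v) k w) {1..}"

definition eDelta :: "('n::finite \<Rightarrow> complex) \<Rightarrow> 'n mould \<Rightarrow> 'n mould" where
  "eDelta lam M w = exp (- ldot lam (wnorm w)) * M w"

text \<open>Mould composition: (M o N)^a = sum over factorisations a = a^1...a^r into nonempty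
  words of M^(||a^1||...||a^r||) N^(a^1) ... N^(a^r) (coefficient of a in the generating series
  sum_b M^b Phi_N^(b_1) ... Phi_N^(b_r)).\<close>
definition mcomp :: "'n mould \<Rightarrow> 'n mould \<Rightarrow> 'n mould" where
  "mcomp M N a = (\<Sum>ps\<in>{ps. concat ps = a \<and> [] \<notin> set ps}.
                     M (map wnorm ps) * prod_list (map N ps))"

definition mcomp_pow :: "'n mould \<Rightarrow> nat \<Rightarrow> 'n mould" where
  "mcomp_pow L r = ((\<lambda>M. mcomp M L) ^^ (r - 1)) L"

definition Dem :: "('n::finite \<Rightarrow> complex) \<Rightarrow> 'n mould" where
  "Dem lam w = (case w of [m] \<Rightarrow> (if exp (ldot lam m) \<noteq> 1 then 1 / (1 - exp (ldot lam m)) else 0)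
                          | _ \<Rightarrow> 0)"

definition Sem :: "('n::finite \<Rightarrow> complex) \<Rightarrow> 'n mould" where
  "Sem lam = mmul (mmul (eDelta lam (mExp (Dem lam))) (mExp mI)) (mExp (\<lambda>w. - Dem lam w))"

definition wordsum :: "'n mould \<Rightarrow> ('n deg \<Rightarrow> 'n op) \<Rightarrow> 'n deg set \<Rightarrow> 'n op" where
  "wordsum M D A \<phi> = (\<lambda>j. infsum (\<lambda>w. M w * Dword D w \<phi> j) (lists A))"

definition Vgen :: "('n::finite \<Rightarrow> complex) \<Rightarrow> ('n deg \<Rightarrow> 'n op) \<Rightarrow> 'n op" where
  "Vgen lam DD = opsum (\<lambda>m. if exp (ldot lam m) \<noteq> 1
                            then opscale (1 / (1 - exp (ldot lam m))) (DD m) else opzero) UNIV"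

end

theory Submission
  imports Defs "HOL-Computational_Algebra.Formal_Power_Series"
begin


lemma infsum_fin_supp:
  fixes g :: "'a \<Rightarrow> 'b::{comm_monoid_add, t2_space}"
  assumes "finite T" "T \<subseteq> S" "\<And>x. x \<in> S - T \<Longrightarrow> g x = 0"
  shows "infsum g S = sum g T"
proof -
  have "infsum g S = infsum g T"
    by (rule infsum_cong_neutral) (use assms in auto)
  then show ?thesis using assms(1) by simp
qed

lemma mmul_Nil[simp]: "mmul M N [] = M [] * N []"
  by (simp add: mmul_def)

lemma mmul_Cons: "mmul M N (x#w) = M [] * N (x#w) + mmul (\<lambda>u. M (x#u)) N w"
  unfolding mmul_def length_Cons sum.atMost_Suc_shift by simp

lemma mmul_add_left: "mmul (\<lambda>u. M u + M' u) N w = mmul M N w + mmul M' N w"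
  unfolding mmul_def by (simp add: algebra_simps sum.distrib)

lemma mmul_scale_left: "mmul (\<lambda>u. a * M u) N w = a * mmul M N w"
  unfolding mmul_def by (simp add: algebra_simps sum_distrib_left)

lemma mmul_add_right: "mmul M (\<lambda>u. N u + N' u) w = mmul M N w + mmul M N' w"
  unfolding mmul_def by (simp add: algebra_simps sum.distrib)

lemma mmul_scale_right: "mmul M (\<lambda>u. a * N u) w = a * mmul M N w"
  unfolding mmul_def by (simp add: algebra_simps sum_distrib_left)

lemma mmul_zero_left: "mmul (\<lambda>u. 0) N w = 0"
  unfolding mmul_def by simp

lemma mmul_cong_left: "(\<And>u. M u = M' u) \<Longrightarrow> mmul M N w = mmul M' N w"
  by (metis ext)

lemma mmul_assoc: "mmul (mmul A B) C w = mmul A (mmul B C) w"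
proof (induction w arbitrary: A)
  case Nil
  then show ?case by simp
next
  case (Cons x w)
  have e: "(\<lambda>u. mmul A B (x#u)) = (\<lambda>u. A [] * B (x#u) + mmul (\<lambda>u. A (x#u)) B u)"
    by (simp add: mmul_Cons)
  have "mmul (mmul A B) C (x#w) = A [] * B [] * C (x#w) +
      (A [] * mmul (\<lambda>u. B (x#u)) C w + mmul (mmul (\<lambda>u. A (x#u)) B) C w)"
    by (simp add: mmul_Cons e mmul_add_left mmul_scale_left)
  also have "\<dots> = mmul A (mmul B C) (x#w)"
    by (simp add: mmul_Cons Cons.IH algebra_simps)
  finally show ?case .
qed

lemma mone_Nil[simp]: "mone [] = 1" and mone_Cons[simp]: "mone (x#w) = 0"
  by (simp_all add: mone_def)

lemma mmul_mone_left: "mmul mone N w = N w"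
  by (cases w) (simp_all add: mmul_Cons mmul_zero_left)

lemma mmul_mone_right: "mmul M mone w = M w"
  by (induction w arbitrary: M) (simp_all add: mmul_Cons)

lemma mmul_mone_left'[simp]: "mmul mone N = N"
  by (rule ext, rule mmul_mone_left)

lemma mmul_mone_right'[simp]: "mmul M mone = M"
  by (rule ext, rule mmul_mone_right)

lemma mpow_add: "mpow M (n + m) w = mmul (mpow M n) (mpow M m) w"
proof (induction n arbitrary: w)
  case 0
  then show ?case by simp
next
  case (Suc n)
  have "mpow M (Suc n + m) = mmul M (mpow M (n + m))" by simp
  also have "\<dots> = mmul M (mmul (mpow M n) (mpow M m))"
    using Suc.IH by (metis ext)
  finally show ?case by (simp add: mmul_assoc fun_eq_iff)
qed

lemma mpow_vanish:
  assumes "Y [] = 0" and "length w < k"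
  shows "mpow Y k w = 0"
  using assms(2)
proof (induction k arbitrary: w)
  case 0
  then show ?case by simp
next
  case (Suc k)
  have "mpow Y (Suc k) w = (\<Sum>i\<le>length w. Y (take i w) * mpow Y k (drop i w))"
    by (simp add: mmul_def)
  also have "\<dots> = 0"
  proof (rule sum.neutral, intro ballI)
    fix i assume "i \<in> {..length w}"
    show "Y (take i w) * mpow Y k (drop i w) = 0"
    proof (cases "i = 0")
      case True then show ?thesis using assms by simp
    next
      case False
      then have "length (drop i w) < k" using Suc.prems \<open>i \<in> {..length w}\<close> by auto
      then show ?thesis by (simp add: Suc.IH)
    qed
  qed
  finally show ?case .
qed

lemma mpow_Nil: "Y [] = 0 \<Longrightarrow> 0 < k \<Longrightarrow> mpow Y k [] = 0"
  by (rule mpow_vanish) auto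

definition ev :: "'n mould \<Rightarrow> complex fps \<Rightarrow> 'n mould" where
  "ev y a w = (\<Sum>n\<le>length w. fps_nth a n * mpow y n w)"

lemma ev_bound:
  assumes "y [] = 0" "length w \<le> N"
  shows "ev y a w = (\<Sum>n\<le>N. fps_nth a n * mpow y n w)"
  unfolding ev_def
  by (rule sum.mono_neutral_left) (use assms mpow_vanish[of y] in auto)

lemma ev_add: "ev y (a + b) w = ev y a w + ev y b w"
  by (simp add: ev_def algebra_simps sum.distrib)

lemma ev_diff: "ev y (a - b) w = ev y a w - ev y b w"
  by (simp add: ev_def algebra_simps sum_subtractf)

lemma ev_one: "ev y 1 w = mone w"
  unfolding ev_def by (simp add: sum.atMost_shift)

lemma ev_X: assumes "y [] = 0" shows "ev y fps_X w = y w"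
proof (cases w)
  case Nil then show ?thesis using assms by (simp add: ev_def)
next
  case (Cons x v)
  have "ev y fps_X w = (\<Sum>n\<le>length w. if n = 1 then mpow y 1 w else 0)"
    unfolding ev_def by (rule sum.cong) auto
  also have "\<dots> = y w" using Cons by (auto simp: mmul_mone_right Suc_le_eq)
  finally show ?thesis .
qed

lemma ev_Nil: "ev y a [] = fps_nth a 0"
  by (simp add: ev_def)

lemma ev_mult:
  assumes y0: "y [] = 0"
  shows "mmul (ev y a) (ev y b) w = ev y (a * b) w"
proof -
  let ?N = "length w"
  let ?g = "\<lambda>n m. fps_nth a n * fps_nth b m * mpow y (n + m) w"
  have "mmul (ev y a) (ev y b) w =
     (\<Sum>k\<le>?N. (\<Sum>n\<le>?N. fps_nth a n * mpow y n (take k w)) * (\<Sum>m\<le>?N. fps_nth b m * mpow y m (drop k w)))"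
    unfolding mmul_def
    by (rule sum.cong[OF refl], subst ev_bound[where y=y and N="?N", OF y0], simp, subst ev_bound[where y=y and N="?N", OF y0], simp_all)
  also have "\<dots> = (\<Sum>n\<le>?N. \<Sum>m\<le>?N. fps_nth a n * fps_nth b m * (\<Sum>k\<le>?N. mpow y n (take k w) * mpow y m (drop k w)))"
  proof -
    have "(\<Sum>k\<le>?N. (\<Sum>n\<le>?N. fps_nth a n * mpow y n (take k w)) * (\<Sum>m\<le>?N. fps_nth b m * mpow y m (drop k w)))
       = (\<Sum>k\<le>?N. \<Sum>n\<le>?N. \<Sum>m\<le>?N. fps_nth a n * fps_nth b m * (mpow y n (take k w) * mpow y m (drop k w)))"
      by (simp only: sum_product) (simp add: mult_ac)
    also have "\<dots> = (\<Sum>n\<le>?N. \<Sum>k\<le>?N. \<Sum>m\<le>?N. fps_nth a n * fps_nth b m * (mpow y n (take k w) * mpow y m (drop k w)))"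
      by (rule sum.swap)
    also have "\<dots> = (\<Sum>n\<le>?N. \<Sum>m\<le>?N. \<Sum>k\<le>?N. fps_nth a n * fps_nth b m * (mpow y n (take k w) * mpow y m (drop k w)))"
      by (rule sum.cong[OF refl], rule sum.swap)
    finally show ?thesis by (simp only: sum_distrib_left)
  qed
  also have "\<dots> = (\<Sum>n\<le>?N. \<Sum>m\<le>?N. ?g n m)"
    by (simp add: mpow_add mmul_def)
  also have "\<dots> = (\<Sum>(n,m)\<in>{..?N} \<times> {..?N}. ?g n m)"
    by (simp add: sum.cartesian_product)
  also have "\<dots> = (\<Sum>(n,m)\<in>{(i,j). i + j \<le> ?N}. ?g n m)"
  proof (rule sum.mono_neutral_right)
    show "finite ({..?N} \<times> {..?N})" by simp
    show "{(i,j). i + j \<le> ?N} \<subseteq> {..?N} \<times> {..?N}" by auto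
    show "\<forall>i\<in>{..?N} \<times> {..?N} - {(i, j). i + j \<le> ?N}. (case i of (n, m) \<Rightarrow> ?g n m) = 0"
    proof
      fix p assume p: "p \<in> {..?N} \<times> {..?N} - {(i, j). i + j \<le> ?N}"
      then have "length w < fst p + snd p" by auto
      then have "mpow y (fst p + snd p) w = 0" by (rule mpow_vanish[where Y=y, OF y0])
      then show "(case p of (n, m) \<Rightarrow> ?g n m) = 0" by (simp add: case_prod_beta)
    qed
  qed
  also have "\<dots> = (\<Sum>p\<le>?N. \<Sum>i\<le>p. ?g i (p - i))"
    by (rule sum.triangle_reindex_eq)
  also have "\<dots> = ev y (a * b) w"
    unfolding ev_def fps_mult_nth atLeast0AtMost
    by (rule sum.cong[OF refl]) (simp add: sum_distrib_right)
  finally show ?thesis .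
qed

lemma ev_pow:
  assumes y0: "y [] = 0"
  shows "mpow (ev y a) k w = ev y (a ^ k) w"
proof (induction k arbitrary: w)
  case 0 then show ?case by (simp add: ev_one)
next
  case (Suc k)
  have "mpow (ev y a) (Suc k) w = mmul (ev y a) (ev y (a ^ k)) w"
  proof -
    have "mpow (ev y a) k = ev y (a ^ k)" by (rule ext) (rule Suc.IH)
    then show ?thesis by simp
  qed
  also have "\<dots> = ev y (a ^ Suc k) w" by (simp add: ev_mult[where y=y, OF y0])
  finally show ?case .
qed

lemma ev_compose:
  assumes y0: "y [] = 0" and b0: "fps_nth b 0 = 0"
  shows "ev (ev y b) a w = ev y (a oo b) w"
proof -
  let ?N = "length w"
  have z0: "ev y b [] = 0" by (simp add: ev_Nil b0)
  have "ev (ev y b) a w = (\<Sum>n\<le>?N. fps_nth a n * ev y (b ^ n) w)"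
    by (simp only: ev_def[of "ev y b"] ev_pow[where y=y, OF y0])
  also have "\<dots> = (\<Sum>n\<le>?N. \<Sum>m\<le>?N. fps_nth a n * fps_nth (b ^ n) m * mpow y m w)"
    unfolding ev_def by (simp add: sum_distrib_left mult_ac)
  also have "\<dots> = (\<Sum>m\<le>?N. \<Sum>n\<le>?N. fps_nth a n * fps_nth (b ^ n) m * mpow y m w)"
    by (rule sum.swap)
  also have "\<dots> = (\<Sum>m\<le>?N. \<Sum>n\<le>m. fps_nth a n * fps_nth (b ^ n) m * mpow y m w)"
  proof (rule sum.cong[OF refl])
    fix m assume m: "m \<in> {..?N}"
    show "(\<Sum>n\<le>?N. fps_nth a n * fps_nth (b ^ n) m * mpow y m w) = (\<Sum>n\<le>m. fps_nth a n * fps_nth (b ^ n) m * mpow y m w)"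
      by (rule sum.mono_neutral_right) (use m startsby_zero_power_prefix[OF b0] in auto)
  qed
  also have "\<dots> = ev y (a oo b) w"
    unfolding ev_def fps_compose_nth atLeast0AtMost by (simp add: sum_distrib_right)
  finally show ?thesis .
qed

lemma mExp_ev:
  assumes z0: "Z [] = 0"
  shows "mExp Z w = ev Z (fps_exp 1) w"
proof -
  have "mExp Z w = (\<Sum>k\<le>length w. mpow Z k w / fact k)"
    unfolding mExp_def
    by (rule infsum_fin_supp) (use mpow_vanish[where Y=Z, OF z0] in auto)
  also have "\<dots> = ev Z (fps_exp 1) w"
    unfolding ev_def by (simp add: fps_exp_def)
  finally show ?thesis .
qed

lemma mLog_ev:
  assumes True: "S [] = 1"
  shows "mLog S w = ev (\<lambda>v. S v - mone v) (fps_ln 1) w"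
proof -
  let ?y = "\<lambda>v. S v - mone v"
  have y0: "?y [] = 0" using True by simp
  have "mLog S w = (\<Sum>k\<in>{1..length w}. (-1) ^ (k + 1) / of_nat k * mpow ?y k w)"
    unfolding mLog_def
    by (rule infsum_fin_supp) (use mpow_vanish[where Y="?y", OF y0] in auto)
  also have "\<dots> = (\<Sum>k\<le>length w. fps_nth (fps_ln 1) k * mpow ?y k w)"
  proof -
    have "(\<Sum>k\<le>length w. fps_nth (fps_ln 1) k * mpow ?y k w) = (\<Sum>k\<in>{1..length w}. fps_nth (fps_ln 1) k * mpow ?y k w)"
      by (rule sum.mono_neutral_right) (auto simp: Suc_le_eq)
    also have "\<dots> = (\<Sum>k\<in>{1..length w}. (-1) ^ (k + 1) / of_nat k * mpow ?y k w)"
    proof (rule sum.cong[OF refl])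
      fix k :: nat assume "k \<in> {1..length w}"
      then have "k = Suc (k - 1)" by auto
      then have "(-1::complex) ^ (k + 1) = (-1) ^ (k - 1)"
        by (metis power_Suc2 add.commute plus_1_eq_Suc mult_minus1_right minus_minus power_Suc)
      then show "fps_nth (fps_ln 1) k * mpow ?y k w = (-1) ^ (k + 1) / of_nat k * mpow ?y k w"
        by (simp add: fps_ln_nth)
    qed
    finally show ?thesis by simp
  qed
  finally show ?thesis by (simp add: ev_def)
qed

lemma fps_E_ln: "fps_exp (1::complex) oo fps_ln 1 = 1 + fps_X"
proof -
  have b0: "fps_nth (fps_exp (1::complex) - 1) 0 = 0" by simp
  have b1: "fps_nth (fps_exp (1::complex) - 1) 1 \<noteq> 0" by simp
  have l: "fps_ln (1::complex) = fps_inv (fps_exp 1 - 1)" by (rule fps_ln_fps_exp_inv) simp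
  have "fps_exp (1::complex) = (fps_exp 1 - 1) + 1" by simp
  then have "fps_exp (1::complex) oo fps_ln 1 = ((fps_exp 1 - 1) oo fps_ln 1) + (1 oo fps_ln 1)"
    by (metis fps_compose_add_distrib)
  also have "\<dots> = fps_X + 1" unfolding l fps_inv_right[OF b0 b1] by simp
  finally show ?thesis by simp
qed

lemma fps_ln_E: "fps_ln (1::complex) oo (fps_exp 1 - 1) = fps_X"
proof -
  have b0: "fps_nth (fps_exp (1::complex) - 1) 0 = 0" by simp
  have b1: "fps_nth (fps_exp (1::complex) - 1) 1 \<noteq> 0" by simp
  have l: "fps_ln (1::complex) = fps_inv (fps_exp 1 - 1)" by (rule fps_ln_fps_exp_inv) simp
  show ?thesis unfolding l by (rule fps_inv[OF b0 b1])
qed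

lemma mExp_mLog:
  assumes s1: "S [] = 1"
  shows "mExp (mLog S) w = S w"
proof -
  let ?y = "\<lambda>v. S v - mone v"
  have y0: "?y [] = 0" using s1 by simp
  have l: "mLog S = ev ?y (fps_ln 1)" by (rule ext) (rule mLog_ev[where S=S, OF s1])
  have l0: "mLog S [] = 0" by (simp add: l ev_Nil)
  have "mExp (mLog S) w = ev (ev ?y (fps_ln 1)) (fps_exp 1) w"
    using mExp_ev[where Z="mLog S", OF l0] l by simp
  also have "\<dots> = ev ?y (fps_exp 1 oo fps_ln 1) w"
    by (rule ev_compose[where y="?y", OF y0]) simp
  also have "\<dots> = S w" by (simp add: fps_E_ln ev_add ev_one ev_X[where y="?y", OF y0])
  finally show ?thesis .
qed

lemma mLog_mExp:
  assumes m0: "M [] = 0"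
  shows "mLog (mExp M) w = M w"
proof -
  have e: "mExp M = ev M (fps_exp 1)" by (rule ext) (rule mExp_ev[where Z=M, OF m0])
  have e1: "mExp M [] = 1" by (simp add: e ev_Nil)
  have y: "(\<lambda>v. mExp M v - mone v) = ev M (fps_exp 1 - 1)"
    by (rule ext) (simp add: e ev_diff ev_one)
  have "mLog (mExp M) w = ev (ev M (fps_exp 1 - 1)) (fps_ln 1) w"
    using mLog_ev[where S="mExp M", OF e1] y by simp
  also have "\<dots> = ev M (fps_ln 1 oo (fps_exp 1 - 1)) w"
    by (rule ev_compose[where y=M, OF m0]) simp
  also have "\<dots> = M w" by (simp add: fps_ln_E ev_X[where y=M, OF m0])
  finally show ?thesis .
qed

lemma mLog_Nil: "S [] = 1 \<Longrightarrow> mLog S [] = 0"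
  by (simp add: mLog_ev ev_Nil)

lemma mExp_Nil: "M [] = 0 \<Longrightarrow> mExp M [] = 1"
  by (simp add: mExp_ev ev_Nil)



definition le_d :: "'n deg \<Rightarrow> 'n mono \<Rightarrow> bool" where
  "le_d m j \<longleftrightarrow> (\<forall>i. m i \<le> int (j i))"

definition subd :: "'n mono \<Rightarrow> 'n deg \<Rightarrow> 'n mono" where
  "subd j m = (\<lambda>i. nat (int (j i) - m i))"

definition hcoef :: "'n deg \<Rightarrow> 'n op \<Rightarrow> 'n mono \<Rightarrow> complex" where
  "hcoef m T = (SOME c. \<forall>\<phi> j. T \<phi> j =
     (if (\<forall>i. m i \<le> int (j i)) then c (\<lambda>i. nat (int (j i) - m i)) * \<phi> (\<lambda>i. nat (int (j i) - m i)) else 0))"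


lemma hom_op_eq:
  assumes "hom_op m T"
  shows "T \<phi> j = (if le_d m j then hcoef m T (subd j m) * \<phi> (subd j m) else 0)"
proof -
  let ?Q = "\<lambda>c. \<forall>\<phi> j. T \<phi> j =
     (if (\<forall>i. m i \<le> int (j i)) then c (\<lambda>i. nat (int (j i) - m i)) * \<phi> (\<lambda>i. nat (int (j i) - m i)) else 0)"
  have ex: "\<exists>c. ?Q c" using assms unfolding hom_op_def by simp
  have "?Q (hcoef m T)" unfolding hcoef_def using someI_ex[OF ex] .
  then show ?thesis unfolding le_d_def subd_def by blast
qed

fun valid :: "'n deg list \<Rightarrow> 'n mono \<Rightarrow> bool" where
  "valid [] j = True"
| "valid (m # w) j = (le_d m j \<and> valid w (subd j m))"

fun endp :: "'n deg list \<Rightarrow> 'n mono \<Rightarrow> 'n mono" where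
  "endp [] j = j"
| "endp (m # w) j = endp w (subd j m)"

fun kap :: "('n deg \<Rightarrow> 'n op) \<Rightarrow> 'n deg list \<Rightarrow> 'n mono \<Rightarrow> complex" where
  "kap D [] j = 1"
| "kap D (m # w) j = hcoef m (D m) (subd j m) * kap D w (subd j m)"

lemma Dword_eq:
  assumes "\<forall>m\<in>set w. hom_op m (D m)"
  shows "Dword D w \<phi> j = (if valid w j then kap D w j * \<phi> (endp w j) else 0)"
  using assms
proof (induction w arbitrary: j)
  case Nil then show ?case by simp
next
  case (Cons m w)
  show ?case using Cons.prems
    by (simp add: hom_op_eq[of m "D m"] Cons.IH)
qed

lemma valid_append: "valid (u @ v) j = (valid u j \<and> valid v (endp u j))"
  by (induction u arbitrary: j) auto

lemma endp_append: "endp (u @ v) j = endp v (endp u j)"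
  by (induction u arbitrary: j) auto

lemma kap_append: "kap D (u @ v) j = kap D u j * kap D v (endp u j)"
  by (induction u arbitrary: j) auto

lemma endp_int:
  "valid w j \<Longrightarrow> int (endp w j i) = int (j i) - wnorm w i"
  by (induction w arbitrary: j) (auto simp: wnorm_def subd_def le_d_def)

lemma wnorm_Nil[simp]: "wnorm [] = (\<lambda>i. 0)" and wnorm_Cons: "wnorm (m # w) = (\<lambda>i. m i + wnorm w i)"
  by (simp_all add: wnorm_def)

lemma wnorm_append: "wnorm (u @ v) = (\<lambda>i. wnorm u i + wnorm v i)"
  by (simp add: wnorm_def)

lemma comp_le_tdeg: "(j::'n::finite mono) i \<le> tdeg j"
  unfolding tdeg_def by (rule member_le_sum) auto

lemma tdeg_subd:
  fixes j :: "'n::finite mono"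
  assumes "le_d m j"
  shows "int (tdeg (subd j m)) = int (tdeg j) - tdeg m"
proof -
  have "int (tdeg (subd j m)) = (\<Sum>i\<in>UNIV. int (j i) - m i)"
    using assms unfolding tdeg_def subd_def le_d_def by (simp add: of_nat_sum)
  also have "\<dots> = int (tdeg j) - tdeg m"
    unfolding tdeg_def by (simp add: sum_subtractf of_nat_sum)
  finally show ?thesis .
qed

definition Box :: "nat \<Rightarrow> 'n deg set" where
  "Box B = {m. \<forall>i. m i \<in> {- int B..int B}}"

lemma finite_Box: "finite (Box B :: 'n::finite deg set)"
proof -
  have "Box B = PiE (UNIV :: 'n set) (\<lambda>_. {- int B..int B})"
    unfolding Box_def by (auto simp: PiE_def extensional_def)
  then show ?thesis by (simp add: finite_PiE)
qed

lemma Box_mono: assumes "B \<le> B'" shows "Box B \<subseteq> Box B'"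
proof
  fix m assume "m \<in> Box B"
  moreover have "int B \<le> int B'" using assms by simp
  ultimately show "m \<in> Box B'" unfolding Box_def by (auto; smt (verit))
qed

definition goodDA :: "('n::finite deg \<Rightarrow> 'n op) \<Rightarrow> 'n deg set \<Rightarrow> bool" where
  "goodDA D A \<longleftrightarrow> (\<forall>m\<in>A. hom_op m (D m) \<and> 1 \<le> tdeg m)"

lemma valid_bound:
  fixes j :: "'n::finite mono"
  assumes "\<forall>m\<in>set w. 1 \<le> tdeg m" "valid w j"
  shows "length w + tdeg (endp w j) \<le> tdeg j \<and> set w \<subseteq> Box (tdeg j)"
  using assms
proof (induction w arbitrary: j)
  case Nil then show ?case by simp
next
  case (Cons m w)
  let ?j' = "subd j m"
  have le: "le_d m j" and v: "valid w ?j'" using Cons.prems by auto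
  have t: "int (tdeg ?j') = int (tdeg j) - tdeg m" by (rule tdeg_subd[OF le])
  have tm: "1 \<le> tdeg m" using Cons.prems by auto
  have IH: "length w + tdeg (endp w ?j') \<le> tdeg ?j' \<and> set w \<subseteq> Box (tdeg ?j')"
    using Cons.IH[of ?j'] Cons.prems v by auto
  have "tdeg ?j' < tdeg j" using t tm by linarith
  then have sb: "Box (tdeg ?j') \<subseteq> Box (tdeg j)" by (intro Box_mono) simp
  have "m \<in> Box (tdeg j)"
    unfolding Box_def
  proof (intro CollectI allI)
    fix i
    have a: "m i = int (j i) - int (?j' i)" using le unfolding subd_def le_d_def by auto
    have "j i \<le> tdeg j" "?j' i \<le> tdeg ?j'" by (rule comp_le_tdeg)+
    then show "m i \<in> {- int (tdeg j)..int (tdeg j)}" using a \<open>tdeg ?j' < tdeg j\<close> by auto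
  qed
  then show ?case using IH sb \<open>tdeg ?j' < tdeg j\<close> by auto
qed

definition VW :: "'n deg set \<Rightarrow> 'n mono \<Rightarrow> 'n deg list set" where
  "VW A j = {w \<in> lists A. valid w j}"

lemma finite_VW:
  fixes j :: "'n::finite mono"
  assumes "\<forall>m\<in>A. 1 \<le> tdeg m"
  shows "finite (VW A j)"
proof (rule finite_subset)
  show "VW A j \<subseteq> {w :: 'n deg list. set w \<subseteq> Box (tdeg j) \<and> length w \<le> tdeg j}"
    using valid_bound assms unfolding VW_def by fastforce
  show "finite {w :: 'n deg list. set w \<subseteq> Box (tdeg j) \<and> length w \<le> tdeg j}"
    by (rule finite_lists_length_le) (simp add: finite_Box)
qed

lemma wordsum_eq:
  assumes g: "goodDA D A"
  shows "wordsum M D A \<phi> j = (\<Sum>w\<in>VW A j. M w * (kap D w j * \<phi> (endp w j)))"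
proof -
  have fin: "finite (VW A j)" using g finite_VW unfolding goodDA_def by blast
  have "wordsum M D A \<phi> j = (\<Sum>w\<in>VW A j. M w * Dword D w \<phi> j)"
    unfolding wordsum_def
  proof (rule infsum_fin_supp[OF fin])
    show "VW A j \<subseteq> lists A" unfolding VW_def by auto
    show "M x * Dword D x \<phi> j = 0" if "x \<in> lists A - VW A j" for x
      using that g Dword_eq[of x D] unfolding VW_def goodDA_def by auto
  qed
  also have "\<dots> = (\<Sum>w\<in>VW A j. M w * (kap D w j * \<phi> (endp w j)))"
    by (rule sum.cong[OF refl]) (use g Dword_eq[of _ D] in \<open>auto simp: VW_def goodDA_def\<close>)
  finally show ?thesis .
qed



lemma VW_Nil: "[] \<in> VW A j" by (simp add: VW_def)

lemma VW_append: "(u @ v \<in> VW A j) = (u \<in> VW A j \<and> v \<in> VW A (endp u j))"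
  by (auto simp: VW_def valid_append)

lemma ws_mmul:
  assumes g: "goodDA D A"
  shows "wordsum (mmul M N) D A \<phi> j = wordsum M D A (wordsum N D A \<phi>) j"
proof -
  have fin: "\<And>j. finite (VW A j)" using g finite_VW unfolding goodDA_def by blast
  have "wordsum M D A (wordsum N D A \<phi>) j =
     (\<Sum>u\<in>VW A j. \<Sum>v\<in>VW A (endp u j). M u * N v * (kap D (u @ v) j * \<phi> (endp (u @ v) j)))"
    by (simp add: wordsum_eq[OF g] sum_distrib_left kap_append endp_append mult_ac)
  also have "\<dots> = (\<Sum>(u,v)\<in>Sigma (VW A j) (\<lambda>u. VW A (endp u j)). M u * N v * (kap D (u @ v) j * \<phi> (endp (u @ v) j)))"
    by (rule sum.Sigma) (use fin in auto)
  also have "\<dots> = (\<Sum>(w,k)\<in>Sigma (VW A j) (\<lambda>w. {..length w}). M (take k w) * N (drop k w) * (kap D w j * \<phi> (endp w j)))"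
  proof (rule sum.reindex_bij_witness[where i="\<lambda>(w,k). (take k w, drop k w)" and j="\<lambda>(u,v). (u @ v, length u)"])
    fix a assume a: "a \<in> Sigma (VW A j) (\<lambda>w. {..length w})"
    show "(case a of (w, k) \<Rightarrow> (take k w, drop k w)) \<in> Sigma (VW A j) (\<lambda>u. VW A (endp u j))"
      using a VW_append[of "take (snd a) (fst a)" "drop (snd a) (fst a)" A j] by auto
  qed (auto simp: VW_append)
  also have "\<dots> = (\<Sum>w\<in>VW A j. \<Sum>k\<le>length w. M (take k w) * N (drop k w) * (kap D w j * \<phi> (endp w j)))"
    by (rule sum.Sigma[symmetric]) (use fin in auto)
  also have "\<dots> = wordsum (mmul M N) D A \<phi> j"
    by (simp add: wordsum_eq[OF g] mmul_def sum_distrib_right)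
  finally show ?thesis by simp
qed

lemma ws_mone:
  assumes g: "goodDA D A"
  shows "wordsum mone D A \<phi> j = \<phi> j"
proof -
  have fin: "finite (VW A j)" using g finite_VW unfolding goodDA_def by blast
  have "wordsum mone D A \<phi> j = (\<Sum>w\<in>VW A j. if w = [] then \<phi> j else 0)"
    unfolding wordsum_eq[OF g] by (rule sum.cong) (auto simp: mone_def)
  also have "\<dots> = \<phi> j" using fin VW_Nil[of A j] by simp
  finally show ?thesis .
qed

lemma ws_mpow:
  assumes g: "goodDA D A"
  shows "wordsum (mpow M n) D A \<phi> j = ((wordsum M D A) ^^ n) \<phi> j"
proof (induction n arbitrary: \<phi> j)
  case 0 then show ?case by (simp add: ws_mone[OF g])
next
  case (Suc n)
  have e: "wordsum (mpow M n) D A \<phi> = ((wordsum M D A) ^^ n) \<phi>" by (rule ext) (rule Suc.IH)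
  show ?case by (simp add: ws_mmul[OF g] e)
qed

lemma ws_series:
  assumes g: "goodDA D A" and m0: "M [] = 0"
  shows "infsum (\<lambda>k. a k * ((wordsum M D A) ^^ k) \<phi> j) K =
         wordsum (\<lambda>w. infsum (\<lambda>k. a k * mpow M k w) K) D A \<phi> j"
proof -
  have fin: "finite (VW A j)" using g finite_VW unfolding goodDA_def by blast
  have tm: "\<forall>m\<in>A. 1 \<le> tdeg m" using g unfolding goodDA_def by blast
  have len: "length w \<le> tdeg j" if "w \<in> VW A j" for w
    using valid_bound[of w j] that tm unfolding VW_def by auto
  let ?F = "K \<inter> {..tdeg j}"
  have "infsum (\<lambda>k. a k * ((wordsum M D A) ^^ k) \<phi> j) K =
        (\<Sum>k\<in>?F. a k * ((wordsum M D A) ^^ k) \<phi> j)"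
  proof (rule infsum_fin_supp)
    show "a k * ((wordsum M D A) ^^ k) \<phi> j = 0" if "k \<in> K - ?F" for k
    proof -
      have "tdeg j < k" using that by auto
      have "wordsum (mpow M k) D A \<phi> j = (\<Sum>w\<in>VW A j. mpow M k w * (kap D w j * \<phi> (endp w j)))"
        by (rule wordsum_eq[OF g])
      also have "\<dots> = 0"
      proof (intro sum.neutral ballI)
        fix w assume "w \<in> VW A j"
        then have "length w < k" using len \<open>tdeg j < k\<close> by fastforce
        then show "mpow M k w * (kap D w j * \<phi> (endp w j)) = 0"
          using mpow_vanish[where Y=M, OF m0] by simp
      qed
      finally show ?thesis by (simp add: ws_mpow[OF g])
    qed
  qed auto
  also have "\<dots> = (\<Sum>k\<in>?F. \<Sum>w\<in>VW A j. a k * mpow M k w * (kap D w j * \<phi> (endp w j)))"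
  proof (rule sum.cong[OF refl])
    fix k
    have "((wordsum M D A) ^^ k) \<phi> j = wordsum (mpow M k) D A \<phi> j" by (rule ws_mpow[OF g, symmetric])
    also have "\<dots> = (\<Sum>w\<in>VW A j. mpow M k w * (kap D w j * \<phi> (endp w j)))" by (rule wordsum_eq[OF g])
    finally show "a k * ((wordsum M D A) ^^ k) \<phi> j = (\<Sum>w\<in>VW A j. a k * mpow M k w * (kap D w j * \<phi> (endp w j)))"
      by (simp add: sum_distrib_left mult.assoc)
  qed
  also have "\<dots> = (\<Sum>w\<in>VW A j. \<Sum>k\<in>?F. a k * mpow M k w * (kap D w j * \<phi> (endp w j)))"
    by (rule sum.swap)
  also have "\<dots> = wordsum (\<lambda>w. infsum (\<lambda>k. a k * mpow M k w) K) D A \<phi> j"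
    unfolding wordsum_eq[OF g]
  proof (rule sum.cong[OF refl])
    fix w assume w: "w \<in> VW A j"
    have "infsum (\<lambda>k. a k * mpow M k w) K = (\<Sum>k\<in>?F. a k * mpow M k w)"
      by (rule infsum_fin_supp) (use len[OF w] mpow_vanish[where Y=M, OF m0] in auto)
    then show "(\<Sum>k\<in>?F. a k * mpow M k w * (kap D w j * \<phi> (endp w j))) =
       infsum (\<lambda>k. a k * mpow M k w) K * (kap D w j * \<phi> (endp w j))"
      by (simp add: sum_distrib_right)
  qed
  finally show ?thesis .
qed

lemma ws_exp:
  assumes g: "goodDA D A" and m0: "M [] = 0"
  shows "opexp (wordsum M D A) = wordsum (mExp M) D A"
proof (intro ext)
  fix \<phi> j
  have "opexp (wordsum M D A) \<phi> j = infsum (\<lambda>k. (1 / fact k) * ((wordsum M D A) ^^ k) \<phi> j) UNIV"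
    unfolding opexp_def by simp
  also have "\<dots> = wordsum (\<lambda>w. infsum (\<lambda>k. (1 / fact k) * mpow M k w) UNIV) D A \<phi> j"
    by (rule ws_series[where M=M, OF g m0])
  also have "\<dots> = wordsum (mExp M) D A \<phi> j"
    unfolding mExp_def by simp
  finally show "opexp (wordsum M D A) \<phi> j = wordsum (mExp M) D A \<phi> j" .
qed

definition opdiff :: "'n op \<Rightarrow> 'n op" where
  "opdiff T \<phi> = (\<lambda>j. T \<phi> j - \<phi> j)"

definition oplog :: "'n op \<Rightarrow> 'n op" where
  "oplog T \<phi> = (\<lambda>j. infsum (\<lambda>k. (-1) ^ (k + 1) / of_nat k * ((opdiff T) ^^ k) \<phi> j) {1..})"

lemma ws_diff:
  assumes g: "goodDA D A"
  shows "opdiff (wordsum S D A) = wordsum (\<lambda>v. S v - mone v) D A"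
proof (intro ext)
  fix \<phi> j
  show "opdiff (wordsum S D A) \<phi> j = wordsum (\<lambda>v. S v - mone v) D A \<phi> j"
    using ws_mone[OF g, of \<phi> j]
    by (simp add: opdiff_def wordsum_eq[OF g] algebra_simps sum_subtractf)
qed

lemma ws_log:
  assumes g: "goodDA D A" and s1: "S [] = 1"
  shows "oplog (wordsum S D A) = wordsum (mLog S) D A"
proof (intro ext)
  fix \<phi> j
  have y0: "(\<lambda>v. S v - mone v) [] = 0" using s1 by simp
  show "oplog (wordsum S D A) \<phi> j = wordsum (mLog S) D A \<phi> j"
    unfolding oplog_def ws_diff[OF g] mLog_def
    by (rule ws_series[where M="\<lambda>v. S v - mone v", OF g y0])
qed

lemma Flin_inj:
  assumes "Flin lam \<circ> X = Flin lam \<circ> Y"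
  shows "X = Y"
proof (intro ext)
  fix \<phi> j
  have "Flin lam (X \<phi>) j = Flin lam (Y \<phi>) j" using assms by (metis comp_apply)
  then show "X \<phi> j = Y \<phi> j" by (simp add: Flin_def)
qed

lemma log_unique:
  assumes g1: "goodDA D1 A1" and g2: "goodDA D2 A2"
    and p1: "Pa [] = 0" and p2: "Pb [] = 0"
    and eq: "Flin lam \<circ> opexp (wordsum Pa D1 A1) = Flin lam \<circ> opexp (wordsum Pb D2 A2)"
  shows "wordsum Pa D1 A1 = wordsum Pb D2 A2"
proof -
  have "wordsum (mExp Pa) D1 A1 = wordsum (mExp Pb) D2 A2"
    using Flin_inj[OF eq] by (simp add: ws_exp[where M=Pa, OF g1 p1] ws_exp[where M=Pb, OF g2 p2])
  then have "oplog (wordsum (mExp Pa) D1 A1) = oplog (wordsum (mExp Pb) D2 A2)" by simp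
  then have "wordsum (mLog (mExp Pa)) D1 A1 = wordsum (mLog (mExp Pb)) D2 A2"
    by (simp add: ws_log[where S="mExp Pa", OF g1 mExp_Nil[where M=Pa, OF p1]] ws_log[where S="mExp Pb", OF g2 mExp_Nil[where M=Pb, OF p2]])
  moreover have "mLog (mExp Pa) = Pa" by (rule ext) (rule mLog_mExp[where M=Pa, OF p1])
  moreover have "mLog (mExp Pb) = Pb" by (rule ext) (rule mLog_mExp[where M=Pb, OF p2])
  ultimately show ?thesis by simp
qed

lemma ldot_diff: "ldot lam (\<lambda>i. a i - b i) = ldot lam a - ldot lam b"
  unfolding ldot_def by (simp add: algebra_simps sum_subtractf)

lemma ws_Flin:
  assumes g: "goodDA D A"
  shows "wordsum M D A \<circ> Flin lam = Flin lam \<circ> wordsum (eDelta lam M) D A"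
proof (intro ext)
  fix \<phi> j
  have "exp (ldot lam (\<lambda>i. int (endp w j i))) = exp (ldot lam (\<lambda>i. int (j i))) * exp (- ldot lam (wnorm w))"
    if "w \<in> VW A j" for w
  proof -
    have v: "valid w j" using that by (simp add: VW_def)
    have "(\<lambda>i. int (endp w j i)) = (\<lambda>i. int (j i) - wnorm w i)" using endp_int[OF v] by auto
    then show ?thesis by (simp add: ldot_diff exp_diff exp_minus field_simps)
  qed
  then show "(wordsum M D A \<circ> Flin lam) \<phi> j = (Flin lam \<circ> wordsum (eDelta lam M) D A) \<phi> j"
    by (simp add: wordsum_eq[OF g] Flin_def eDelta_def sum_distrib_left mult_ac cong: sum.cong)
qed

lemma ws_neg:
  assumes g: "goodDA D A"
  shows "opscale (-1) (wordsum M D A) = wordsum (\<lambda>w. - M w) D A"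
  by (intro ext) (simp add: opscale_def wordsum_eq[OF g] sum_negf)

lemma ws_single:
  assumes "\<And>w. length w \<noteq> 1 \<Longrightarrow> M w = 0"
  shows "wordsum M D A \<phi> j = infsum (\<lambda>m. M [m] * D m \<phi> j) A"
proof -
  have "wordsum M D A \<phi> j = infsum (\<lambda>w. M w * Dword D w \<phi> j) ((\<lambda>m. [m]) ` A)"
    unfolding wordsum_def
  proof (rule infsum_cong_neutral)
    fix x assume x: "x \<in> lists A - (\<lambda>m. [m]) ` A"
    have "length x \<noteq> 1"
    proof
      assume "length x = 1"
      then obtain y where "x = [y]" by (auto simp: length_Suc_conv)
      then show False using x by auto
    qed
    then show "M x * Dword D x \<phi> j = 0" using assms by simp
  qed auto
  also have "\<dots> = infsum ((\<lambda>w. M w * Dword D w \<phi> j) \<circ> (\<lambda>m. [m])) A"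
    by (rule infsum_reindex) (auto simp: inj_on_def)
  also have "\<dots> = infsum (\<lambda>m. M [m] * D m \<phi> j) A" by (simp add: comp_def)
  finally show ?thesis .
qed



lemma tdeg_wnorm_Cons: "tdeg (wnorm (m # w)) = tdeg m + tdeg (wnorm w)"
  unfolding tdeg_def wnorm_Cons by (simp add: sum.distrib)

lemma tdeg_zero: "tdeg (\<lambda>i::'n::finite. 0::int) = 0"
  by (simp add: tdeg_def)

lemma tdeg_wnorm_ge:
  fixes w :: "'n::finite deg list"
  assumes "\<forall>m\<in>set w. 1 \<le> tdeg m"
  shows "int (length w) \<le> tdeg (wnorm w)"
  using assms by (induction w) (auto simp: tdeg_wnorm_Cons tdeg_zero)

lemma finite_parts:
  fixes a :: "'a list"
  shows "finite {ps. concat ps = a \<and> [] \<notin> set ps}"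
proof (rule finite_subset)
  let ?U = "{u. set u \<subseteq> set a \<and> length u \<le> length a}"
  show "{ps. concat ps = a \<and> [] \<notin> set ps} \<subseteq> {ps. set ps \<subseteq> ?U \<and> length ps \<le> length a}"
  proof
    fix ps :: "'a list list" assume ps: "ps \<in> {ps. concat ps = a \<and> [] \<notin> set ps}"
    then have c: "concat ps = a" and a: "[] \<notin> set ps" by auto
    have "length ps \<le> length (concat ps)" using a
    proof (induction ps)
      case Nil then show ?case by simp
    next
      case (Cons u ps)
      then have "1 \<le> length u" by (cases u) auto
      then show ?case using Cons by simp
    qed
    moreover have "set ps \<subseteq> ?U"
    proof
      fix u assume "u \<in> set ps"
      then show "u \<in> ?U" using c member_le_sum_list[of "length u" "map length ps"] by (auto simp: length_concat)
    qed
    ultimately show "ps \<in> {ps. set ps \<subseteq> ?U \<and> length ps \<le> length a}" using c by auto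
  qed
  show "finite {ps. set ps \<subseteq> ?U \<and> length ps \<le> length a}"
    by (rule finite_lists_length_le) (rule finite_lists_length_le, simp)
qed

lemma prod_mI: "prod_list (map mI ps) = (if \<forall>u\<in>set ps. length u = 1 then 1 else 0)"
  by (induction ps) (auto simp: mI_def)

lemma all_single: "(\<forall>u\<in>set ps. length u = 1) \<longleftrightarrow> ps = map (\<lambda>x. [x]) (concat ps)"
proof (induction ps)
  case Nil then show ?case by simp
next
  case (Cons u ps)
  show ?case
  proof
    assume "\<forall>u\<in>set (u # ps). length u = 1"
    then show "u # ps = map (\<lambda>x. [x]) (concat (u # ps))" using Cons
      by (auto simp: length_Suc_conv)
  next
    assume h: "u # ps = map (\<lambda>x. [x]) (concat (u # ps))"
    then have "u \<noteq> []" by (cases u) auto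
    then obtain x v where u: "u = x # v" by (cases u) auto
    with h have "v = []" by (cases v) auto
    with h u have "ps = map (\<lambda>x. [x]) (concat ps)" by simp
    with Cons u \<open>v = []\<close> show "\<forall>u\<in>set (u # ps). length u = 1" by auto
  qed
qed

lemma wnorm_single: "wnorm [x] = x"
  by (simp add: wnorm_def)

lemma mcomp_mI: "mcomp M mI a = M a"
proof -
  let ?S = "{ps. concat ps = a \<and> [] \<notin> set ps}"
  let ?p = "map (\<lambda>x. [x]) a"
  have p: "?p \<in> ?S" by (induction a) auto
  have "mcomp M mI a = (\<Sum>ps\<in>?S. if ps = ?p then M (map wnorm ps) else 0)"
    unfolding mcomp_def prod_mI
    by (rule sum.cong[OF refl]) (use all_single in auto)
  also have "\<dots> = M (map wnorm ?p)"
    using finite_parts[of a] p by simp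
  also have "map wnorm ?p = a" by (induction a) (auto simp: wnorm_single)
  finally show ?thesis .
qed

lemma endp_eq_subd:
  assumes "valid w j" "le_d c j"
  shows "endp w j = subd j c \<longleftrightarrow> wnorm w = c"
proof -
  have "endp w j = subd j c \<longleftrightarrow> (\<forall>i. int (endp w j i) = int (subd j c i))"
    by (auto simp: fun_eq_iff)
  also have "\<dots> \<longleftrightarrow> (\<forall>i. wnorm w i = c i)"
    using endp_int[OF assms(1)] assms(2) by (auto simp: subd_def le_d_def)
  finally show ?thesis by (auto simp: fun_eq_iff)
qed

lemma valid_le_d: "valid w j \<Longrightarrow> le_d (wnorm w) j"
  using endp_int[of w j] unfolding le_d_def by (metis diff_ge_0_iff_ge of_nat_0_le_iff)

definition Apos :: "'n::finite deg set" where "Apos = {c. 1 \<le> tdeg c}"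

definition goodDD :: "('n::finite deg \<Rightarrow> 'n op) \<Rightarrow> bool" where
  "goodDD DD \<longleftrightarrow> (\<forall>c. hom_op c (DD c) \<and> (tdeg c < 1 \<longrightarrow> DD c = opzero))"

lemma goodDD_good: "goodDD DD \<Longrightarrow> goodDA DD Apos"
  by (simp add: goodDD_def goodDA_def Apos_def)

lemma extract_DD:
  assumes g: "goodDA D A" and gd: "goodDD DD"
    and eq: "wordsum mI DD Apos = wordsum P D A"
    and c: "c \<in> Apos"
  shows "DD c \<psi> j = (\<Sum>w\<in>{w\<in>VW A j. wnorm w = c}. P w * (kap D w j * \<psi> (endp w j)))"
proof (cases "le_d c j")
  case False
  have hc: "hom_op c (DD c)" using gd by (simp add: goodDD_def)
  have e: "{w\<in>VW A j. wnorm w = c} = {}"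
    using False valid_le_d by (auto simp: VW_def)
  show ?thesis unfolding e using False by (simp add: hom_op_eq[OF hc])
next
  case True
  note cj = True
  have hc: "hom_op c (DD c)" using gd by (simp add: goodDD_def)
  have g': "goodDA DD Apos" by (rule goodDD_good[OF gd])
  have fin: "finite (VW A j)" "finite (VW Apos j)" using g g' finite_VW unfolding goodDA_def by blast+
  let ?k = "subd j c"
  let ?d = "\<lambda>l. if l = ?k then (1::complex) else 0"
  have "wordsum mI DD Apos ?d j = (\<Sum>b\<in>VW Apos j. if b = [c] then hcoef c (DD c) ?k else 0)"
    unfolding wordsum_eq[OF g']
  proof (rule sum.cong[OF refl])
    fix b assume b: "b \<in> VW Apos j"
    show "mI b * (kap DD b j * ?d (endp b j)) = (if b = [c] then hcoef c (DD c) ?k else 0)"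
    proof (cases "length b = 1")
      case False
      then have "b \<noteq> [c]" by auto
      then show ?thesis using False by (simp add: mI_def)
    next
      case True
      then obtain m where bm: "b = [m]" by (auto simp: length_Suc_conv)
      then have vm: "valid [m] j" using b by (simp add: VW_def)
      have "endp [m] j = ?k \<longleftrightarrow> m = c"
        using endp_eq_subd[OF vm cj] by (simp add: wnorm_single)
      then show ?thesis using bm by (auto simp: mI_def)
    qed
  qed
  also have "\<dots> = hcoef c (DD c) ?k"
    using fin(2) c True by (simp add: VW_def le_d_def)
  finally have e1: "wordsum mI DD Apos ?d j = hcoef c (DD c) ?k" .
  have "wordsum P D A ?d j = (\<Sum>w\<in>VW A j. if wnorm w = c then P w * kap D w j else 0)"
    unfolding wordsum_eq[OF g]
    by (rule sum.cong[OF refl]) (use endp_eq_subd True in \<open>auto simp: VW_def\<close>)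
  also have "\<dots> = (\<Sum>w\<in>{w\<in>VW A j. wnorm w = c}. P w * kap D w j)"
    by (rule sum.inter_filter[symmetric, OF fin(1)])
  finally have e2: "wordsum P D A ?d j = (\<Sum>w\<in>{w\<in>VW A j. wnorm w = c}. P w * kap D w j)" .
  have "DD c \<psi> j = hcoef c (DD c) ?k * \<psi> ?k" using True by (simp add: hom_op_eq[OF hc])
  also have "\<dots> = (\<Sum>w\<in>{w\<in>VW A j. wnorm w = c}. P w * kap D w j) * \<psi> ?k"
    using e1 e2 eq by simp
  also have "\<dots> = (\<Sum>w\<in>{w\<in>VW A j. wnorm w = c}. P w * (kap D w j * \<psi> (endp w j)))"
    unfolding sum_distrib_right
  proof (rule sum.cong[OF refl])
    fix w assume "w \<in> {w\<in>VW A j. wnorm w = c}"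
    then have v: "valid w j" and wc: "wnorm w = c" by (auto simp: VW_def)
    have "endp w j = ?k" using endp_eq_subd[OF v cj] wc by simp
    then show "P w * kap D w j * \<psi> ?k = P w * (kap D w j * \<psi> (endp w j))" by simp
  qed
  finally show ?thesis .
qed

definition PSall :: "'n deg set \<Rightarrow> 'n mono \<Rightarrow> 'n deg list list set" where
  "PSall A j = {ps. concat ps \<in> VW A j \<and> [] \<notin> set ps}"

definition PS :: "'n deg set \<Rightarrow> 'n deg list \<Rightarrow> 'n mono \<Rightarrow> 'n deg list list set" where
  "PS A b j = {ps \<in> PSall A j. map wnorm ps = b}"

lemma finite_PSall:
  assumes g: "goodDA D A"
  shows "finite (PSall A j)"
proof -
  have fin: "finite (VW A j)" using g finite_VW unfolding goodDA_def by blast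
  have "PSall A j \<subseteq> (\<Union>a\<in>VW A j. {ps. concat ps = a \<and> [] \<notin> set ps})"
    unfolding PSall_def by auto
  moreover have "finite (\<Union>a\<in>VW A j. {ps. concat ps = a \<and> [] \<notin> set ps})"
    using fin finite_parts by blast
  ultimately show ?thesis by (rule finite_subset)
qed

lemma finite_PS: "goodDA D A \<Longrightarrow> finite (PS A b j)"
  using finite_PSall unfolding PS_def by (metis (no_types, lifting) finite_subset mem_Collect_eq subsetI)

lemma wnorm_Nil_tdeg: "c \<in> Apos \<Longrightarrow> wnorm [] \<noteq> c"
  by (auto simp: Apos_def tdeg_zero)

lemma subst_word:
  assumes g: "goodDA D A" and gd: "goodDD DD"
    and eq: "wordsum mI DD Apos = wordsum P D A"
  shows "b \<in> lists Apos \<Longrightarrow> Dword DD b \<psi> j =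
     (\<Sum>ps\<in>PS A b j. prod_list (map P ps) * (kap D (concat ps) j * \<psi> (endp (concat ps) j)))"
proof (induction b arbitrary: j)
  case Nil
  have "PS A [] j = {[]}" by (auto simp: PS_def PSall_def VW_def)
  then show ?case by simp
next
  case (Cons c b)
  have c: "c \<in> Apos" and b: "b \<in> lists Apos" using Cons.prems by auto
  have fin: "\<And>j. finite (VW A j)" using g finite_VW unfolding goodDA_def by blast
  let ?U = "{u\<in>VW A j. wnorm u = c}"
  let ?X = "\<lambda>ps j. prod_list (map P ps) * (kap D (concat ps) j * \<psi> (endp (concat ps) j))"
  have "Dword DD (c # b) \<psi> j = DD c (Dword DD b \<psi>) j" by simp
  also have "\<dots> = (\<Sum>u\<in>?U. P u * (kap D u j * Dword DD b \<psi> (endp u j)))"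
    by (rule extract_DD[OF g gd eq c])
  also have "\<dots> = (\<Sum>u\<in>?U. \<Sum>ps\<in>PS A b (endp u j). P u * kap D u j * ?X ps (endp u j))"
    by (simp add: Cons.IH[OF b] sum_distrib_left mult.assoc)
  also have "\<dots> = (\<Sum>(u,ps)\<in>Sigma ?U (\<lambda>u. PS A b (endp u j)). P u * kap D u j * ?X ps (endp u j))"
    by (rule sum.Sigma) (use fin finite_PS[OF g] in auto)
  also have "\<dots> = (\<Sum>qs\<in>PS A (c # b) j. ?X qs j)"
  proof (rule sum.reindex_bij_witness[where i="\<lambda>qs. (hd qs, tl qs)" and j="\<lambda>(u,ps). u # ps"])
    fix a assume a: "a \<in> Sigma ?U (\<lambda>u. PS A b (endp u j))"
    then show "(hd (case a of (u, ps) \<Rightarrow> u # ps), tl (case a of (u, ps) \<Rightarrow> u # ps)) = a" by auto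
    have "fst a \<noteq> []" using a wnorm_Nil_tdeg[OF c] by auto
    then show "(case a of (u, ps) \<Rightarrow> u # ps) \<in> PS A (c # b) j"
      using a by (auto simp: PS_def PSall_def VW_append)
    show "(case (case a of (u, ps) \<Rightarrow> u # ps) of qs \<Rightarrow> ?X qs j) =
        (case a of (u, ps) \<Rightarrow> P u * kap D u j * ?X ps (endp u j))"
      by (auto simp: kap_append endp_append case_prod_beta)
  next
    fix q assume q: "q \<in> PS A (c # b) j"
    then obtain u ps where qe: "q = u # ps" by (cases q) (auto simp: PS_def)
    show "(case (hd q, tl q) of (u, ps) \<Rightarrow> u # ps) = q" using qe by simp
    show "(hd q, tl q) \<in> Sigma ?U (\<lambda>u. PS A b (endp u j))"
      using q qe by (auto simp: PS_def PSall_def VW_append)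
  qed
  finally show ?case .
qed

lemma subst_main:
  assumes g: "goodDA D A" and gd: "goodDD DD"
    and eq: "wordsum mI DD Apos = wordsum P D A"
  shows "wordsum M DD Apos \<psi> j = wordsum (mcomp M P) D A \<psi> j"
proof -
  have tm: "\<forall>m\<in>A. 1 \<le> tdeg m" using g unfolding goodDA_def by blast
  have fin: "finite (PSall A j)" by (rule finite_PSall[OF g])
  have finV: "finite (VW A j)" using g finite_VW unfolding goodDA_def by blast
  let ?X = "\<lambda>ps. prod_list (map P ps) * (kap D (concat ps) j * \<psi> (endp (concat ps) j))"
  let ?T = "map wnorm ` PSall A j"
  have T: "?T \<subseteq> lists Apos"
  proof
    fix b assume "b \<in> ?T"
    then obtain ps where ps: "ps \<in> PSall A j" and b: "b = map wnorm ps" by auto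
    have "c \<in> Apos" if "c \<in> set b" for c
    proof -
      obtain u where u: "u \<in> set ps" and cu: "c = wnorm u" using b \<open>c \<in> set b\<close> by auto
      have "u \<noteq> []" "u \<in> lists A" using ps u by (auto simp: PSall_def VW_def)
      then have "1 \<le> int (length u)" "int (length u) \<le> tdeg (wnorm u)"
        using tdeg_wnorm_ge[of u] tm by (auto simp: Suc_le_eq)
      then show "c \<in> Apos" using cu by (simp add: Apos_def)
    qed
    then show "b \<in> lists Apos" by auto
  qed
  have "wordsum M DD Apos \<psi> j = (\<Sum>b\<in>?T. M b * Dword DD b \<psi> j)"
    unfolding wordsum_def
  proof (rule infsum_fin_supp)
    show "finite ?T" using fin by simp
    show "?T \<subseteq> lists Apos" by (rule T)
    fix b assume b: "b \<in> lists Apos - ?T"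
    then have "PS A b j = {}" by (auto simp: PS_def)
    then show "M b * Dword DD b \<psi> j = 0" using subst_word[OF g gd eq, of b] b by simp
  qed
  also have "\<dots> = (\<Sum>b\<in>?T. \<Sum>ps\<in>{ps \<in> PSall A j. map wnorm ps = b}. M (map wnorm ps) * ?X ps)"
  proof (rule sum.cong[OF refl])
    fix b assume "b \<in> ?T"
    then have "b \<in> lists Apos" using T by blast
    then show "M b * Dword DD b \<psi> j = (\<Sum>ps\<in>{ps \<in> PSall A j. map wnorm ps = b}. M (map wnorm ps) * ?X ps)"
      using subst_word[OF g gd eq, of b]
      by (simp add: PS_def sum_distrib_left)
  qed
  also have "\<dots> = (\<Sum>ps\<in>PSall A j. M (map wnorm ps) * ?X ps)"
    by (rule sum.image_gen[symmetric, OF fin])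
  also have "\<dots> = (\<Sum>a\<in>concat ` PSall A j. \<Sum>ps\<in>{ps \<in> PSall A j. concat ps = a}. M (map wnorm ps) * ?X ps)"
    by (rule sum.image_gen[OF fin])
  also have "concat ` PSall A j = VW A j"
  proof
    show "concat ` PSall A j \<subseteq> VW A j" by (auto simp: PSall_def)
    show "VW A j \<subseteq> concat ` PSall A j"
    proof
      fix a assume a: "a \<in> VW A j"
      have "concat (map (\<lambda>x. [x]) a) = a" by (induction a) auto
      moreover have "[] \<notin> set (map (\<lambda>x. [x]) a)" by auto
      ultimately show "a \<in> concat ` PSall A j" using a
        by (metis (mono_tags, lifting) PSall_def image_eqI mem_Collect_eq)
    qed
  qed
  also have "(\<Sum>a\<in>VW A j. \<Sum>ps\<in>{ps \<in> PSall A j. concat ps = a}. M (map wnorm ps) * ?X ps) =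
      wordsum (mcomp M P) D A \<psi> j"
    unfolding wordsum_eq[OF g]
  proof (rule sum.cong[OF refl])
    fix a assume a: "a \<in> VW A j"
    have e: "{ps \<in> PSall A j. concat ps = a} = {ps. concat ps = a \<and> [] \<notin> set ps}"
      using a by (auto simp: PSall_def)
    show "(\<Sum>ps\<in>{ps \<in> PSall A j. concat ps = a}. M (map wnorm ps) * ?X ps) =
        mcomp M P a * (kap D a j * \<psi> (endp a j))"
      unfolding e mcomp_def sum_distrib_right
      by (rule sum.cong[OF refl]) (auto simp: mult_ac)
  qed
  finally show ?thesis .
qed



lemma opsum_DD:
  assumes gd: "goodDD DD"
  shows "opsum DD UNIV = wordsum mI DD Apos"
proof (intro ext)
  fix \<phi> j
  have "wordsum mI DD Apos \<phi> j = infsum (\<lambda>m. mI [m] * DD m \<phi> j) Apos"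
    by (rule ws_single) (simp add: mI_def)
  also have "\<dots> = infsum (\<lambda>m. DD m \<phi> j) UNIV"
    by (rule infsum_cong_neutral) (use gd in \<open>auto simp: mI_def Apos_def goodDD_def opzero_def\<close>)
  finally show "opsum DD UNIV \<phi> j = wordsum mI DD Apos \<phi> j" by (simp add: opsum_def)
qed

lemma opsum_D:
  shows "opsum D A = wordsum mI D A"
proof (intro ext)
  fix \<phi> j
  have "wordsum mI D A \<phi> j = infsum (\<lambda>m. mI [m] * D m \<phi> j) A"
    by (rule ws_single) (simp add: mI_def)
  then show "opsum D A \<phi> j = wordsum mI D A \<phi> j" by (simp add: opsum_def mI_def)
qed

lemma Vgen_DD:
  assumes gd: "goodDD DD"
  shows "Vgen lam DD = wordsum (Dem lam) DD Apos"
proof (intro ext)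
  fix \<phi> j
  have "wordsum (Dem lam) DD Apos \<phi> j = infsum (\<lambda>m. Dem lam [m] * DD m \<phi> j) Apos"
    by (rule ws_single) (auto simp: Dem_def split: list.split)
  also have "\<dots> = infsum (\<lambda>m. (if exp (ldot lam m) \<noteq> 1 then opscale (1 / (1 - exp (ldot lam m))) (DD m) else opzero) \<phi> j) UNIV"
    by (rule infsum_cong_neutral) (use gd in \<open>auto simp: Dem_def Apos_def goodDD_def opzero_def opscale_def\<close>)
  finally show "Vgen lam DD \<phi> j = wordsum (Dem lam) DD Apos \<phi> j" by (simp add: Vgen_def opsum_def)
qed

lemma Sem_Nil: "Sem lam [] = 1"
  by (simp add: Sem_def eDelta_def mExp_Nil mI_def Dem_def ldot_def)

lemma step_one:
  assumes gd: "goodDD DD"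
  shows "opexp (Vgen lam DD) \<circ> (Flin lam \<circ> opexp (opsum DD UNIV)) \<circ> opexp (opscale (-1) (Vgen lam DD))
       = Flin lam \<circ> opexp (wordsum (mLog (Sem lam)) DD Apos)"
proof -
  have g: "goodDA DD Apos" by (rule goodDD_good[OF gd])
  have d0: "Dem lam [] = 0" by (simp add: Dem_def)
  have nd0: "(\<lambda>w. - Dem lam w) [] = 0" by (simp add: Dem_def)
  have i0: "mI [] = 0" by (simp add: mI_def)
  have l0: "mLog (Sem lam) [] = 0" by (rule mLog_Nil[where S="Sem lam", OF Sem_Nil])
  have e1: "opexp (Vgen lam DD) = wordsum (mExp (Dem lam)) DD Apos"
    by (simp add: Vgen_DD[OF gd] ws_exp[where M="Dem lam", OF g d0])
  have e2: "opexp (opsum DD UNIV) = wordsum (mExp mI) DD Apos"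
    by (simp add: opsum_DD[OF gd] ws_exp[where M=mI, OF g i0])
  have e3: "opexp (opscale (-1) (Vgen lam DD)) = wordsum (mExp (\<lambda>w. - Dem lam w)) DD Apos"
    by (simp add: Vgen_DD[OF gd] ws_neg[OF g] ws_exp[where M="\<lambda>w. - Dem lam w", OF g nd0])
  have c: "wordsum (mExp (Dem lam)) DD Apos \<circ> Flin lam = Flin lam \<circ> wordsum (eDelta lam (mExp (Dem lam))) DD Apos"
    by (rule ws_Flin[OF g])
  have "opexp (Vgen lam DD) \<circ> (Flin lam \<circ> opexp (opsum DD UNIV)) \<circ> opexp (opscale (-1) (Vgen lam DD))
      = (wordsum (mExp (Dem lam)) DD Apos \<circ> Flin lam) \<circ> wordsum (mExp mI) DD Apos \<circ> wordsum (mExp (\<lambda>w. - Dem lam w)) DD Apos"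
    by (simp add: e1 e2 e3 comp_assoc)
  also have "\<dots> = Flin lam \<circ> (wordsum (eDelta lam (mExp (Dem lam))) DD Apos \<circ> wordsum (mExp mI) DD Apos \<circ> wordsum (mExp (\<lambda>w. - Dem lam w)) DD Apos)"
    by (simp add: c comp_assoc)
  also have "wordsum (eDelta lam (mExp (Dem lam))) DD Apos \<circ> wordsum (mExp mI) DD Apos \<circ> wordsum (mExp (\<lambda>w. - Dem lam w)) DD Apos
      = wordsum (Sem lam) DD Apos"
    by (intro ext) (simp add: Sem_def ws_mmul[OF g])
  also have "wordsum (Sem lam) DD Apos = wordsum (mExp (mLog (Sem lam))) DD Apos"
  proof -
    have "mExp (mLog (Sem lam)) = Sem lam" by (rule ext) (rule mExp_mLog[where S="Sem lam", OF Sem_Nil])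
    then show ?thesis by simp
  qed
  also have "\<dots> = opexp (wordsum (mLog (Sem lam)) DD Apos)"
    by (rule ws_exp[where M="mLog (Sem lam)", OF g l0, symmetric])
  finally show ?thesis .
qed

theorem mainTheorem6:
  fixes lam :: "'n::finite \<Rightarrow> complex"
    and f :: "'n \<Rightarrow> 'n series"
    and A :: "'n deg set"
    and D :: "'n deg \<Rightarrow> 'n op"
    and G :: "nat \<Rightarrow> 'n op"
    and DD :: "nat \<Rightarrow> 'n deg \<Rightarrow> 'n op"
    and r :: nat
  assumes f_lin: "\<forall>i k. tdeg k \<le> 1 \<longrightarrow> f i k = (if k = unitv i then exp (lam i) else 0)"
    and f_analytic: "\<exists>C R. 0 < R \<and> (\<forall>i k. cmod (f i k) \<le> C * R ^ tdeg k)"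
    and A_add: "\<forall>a\<in>A. \<forall>b\<in>A. (\<lambda>i. a i + b i) \<in> A"
    and A_pos: "\<forall>m\<in>A. 1 \<le> tdeg m"
    and D_hom: "\<forall>m\<in>A. hom_der m (D m)"
    and F_eq: "compF f = Flin lam \<circ> opexp (opsum D A)"
    and r_pos: "1 \<le> r"
    and G0: "G 0 = compF f"
    and DD_hom: "\<forall>i\<in>{1..r}. \<forall>m. hom_der m (DD i m) \<and> (tdeg m < 1 \<longrightarrow> DD i m = opzero)"
    and DD_eq: "\<forall>i\<in>{1..r}. G (i - 1) = Flin lam \<circ> opexp (opsum (DD i) UNIV)"
    and G_step: "\<forall>i\<in>{1..r}. G i = opexp (Vgen lam (DD i)) \<circ> G (i - 1)
                                     \<circ> opexp (opscale (-1) (Vgen lam (DD i)))"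
  shows "G r = Flin lam \<circ> opexp (wordsum (mcomp_pow (mLog (Sem lam)) r) D A)"
proof -
  let ?L = "mLog (Sem lam)"
  have l0: "?L [] = 0" by (rule mLog_Nil[where S="Sem lam", OF Sem_Nil])
  have i0: "mI [] = (0::complex)" by (simp add: mI_def)
  have g: "goodDA D A" using D_hom A_pos by (simp add: goodDA_def hom_der_def)
  have gd: "goodDD (DD i)" if "i \<in> {1..r}" for i
    using DD_hom that by (simp add: goodDD_def hom_der_def)
  have Gi: "G i = Flin lam \<circ> opexp (wordsum ?L (DD i) Apos)" if i: "i \<in> {1..r}" for i
  proof -
    have "G i = opexp (Vgen lam (DD i)) \<circ> (Flin lam \<circ> opexp (opsum (DD i) UNIV)) \<circ> opexp (opscale (-1) (Vgen lam (DD i)))"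
      using G_step DD_eq i by simp
    also have "\<dots> = Flin lam \<circ> opexp (wordsum ?L (DD i) Apos)"
      by (rule step_one[OF gd[OF i]])
    finally show ?thesis .
  qed
  have chain: "wordsum M (DD (Suc i)) Apos = wordsum (mcomp M ?L) (DD i) Apos"
    if i: "1 \<le> i" "Suc i \<le> r" for i M
  proof -
    have i1: "i \<in> {1..r}" and i2: "Suc i \<in> {1..r}" using i by auto
    have "G (Suc i - 1) = Flin lam \<circ> opexp (opsum (DD (Suc i)) UNIV)" using DD_eq i2 by blast
    then have "Flin lam \<circ> opexp (wordsum mI (DD (Suc i)) Apos) = G i"
      using opsum_DD[OF gd[OF i2]] by simp
    also have "\<dots> = Flin lam \<circ> opexp (wordsum ?L (DD i) Apos)" by (rule Gi[OF i1])
    finally have "wordsum mI (DD (Suc i)) Apos = wordsum ?L (DD i) Apos"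
      by (rule log_unique[where Pa=mI and Pb="?L", OF goodDD_good[OF gd[OF i2]] goodDD_good[OF gd[OF i1]] i0 l0])
    then show ?thesis
      by (intro ext) (rule subst_main[OF goodDD_good[OF gd[OF i1]] gd[OF i2]])
  qed
  have r1: "1 \<in> {1..r}" using r_pos by simp
  have base: "wordsum M (DD 1) Apos = wordsum M D A" for M
  proof -
    have "G (1 - 1) = Flin lam \<circ> opexp (opsum (DD 1) UNIV)" using DD_eq r1 by blast
    then have "Flin lam \<circ> opexp (wordsum mI (DD 1) Apos) = G 0"
      using opsum_DD[OF gd[OF r1]] by simp
    also have "\<dots> = Flin lam \<circ> opexp (wordsum mI D A)"
      using G0 F_eq opsum_D[of D A] by simp
    finally have "wordsum mI (DD 1) Apos = wordsum mI D A"
      by (rule log_unique[where Pa=mI and Pb=mI, OF goodDD_good[OF gd[OF r1]] g i0 i0])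
    then have "wordsum M (DD 1) Apos = wordsum (mcomp M mI) D A"
      by (intro ext) (rule subst_main[OF g gd[OF r1]])
    moreover have "mcomp M mI = M" by (rule ext) (rule mcomp_mI)
    ultimately show ?thesis by simp
  qed
  let ?f = "\<lambda>M. mcomp M ?L"
  have ind: "k < r \<Longrightarrow> wordsum ?L (DD r) Apos = wordsum ((?f ^^ k) ?L) (DD (r - k)) Apos" for k
  proof (induction k)
    case 0 then show ?case by simp
  next
    case (Suc k)
    then have "wordsum ?L (DD r) Apos = wordsum ((?f ^^ k) ?L) (DD (Suc (r - Suc k))) Apos"
      by (simp add: Suc_diff_Suc)
    also have "\<dots> = wordsum (mcomp ((?f ^^ k) ?L) ?L) (DD (r - Suc k)) Apos"
      by (rule chain) (use Suc.prems in auto)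
    finally show ?case by simp
  qed
  have "wordsum ?L (DD r) Apos = wordsum ((?f ^^ (r - 1)) ?L) (DD 1) Apos"
    using ind[of "r - 1"] r_pos by simp
  also have "\<dots> = wordsum (mcomp_pow ?L r) D A"
    unfolding mcomp_pow_def by (rule base)
  finally show ?thesis using Gi[of r] r_pos by simp
qed

end
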